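(* Let $G$ be a (not necessarily connected) graph on $n\ge1$ vertices with adjacency matrix $A$, let $m\ge1$, and let $\alpha\in\mathbb{R}\setminus(\mathrm{ev}(A)\cup\{0,-m,-2m\})$. Then there exist $\mu\in\mathbb{R}$, $f\in\mathbb{R}^m$, $g\in\mathbb{R}^n$ with \[ (J_m+\alpha I)f=\tfrac{\mu}{2}\mathbf 1,\quad (A-J_n-\alpha I)g=-\tfrac{\mu}{2}\mathbf 1,\quad \langle f,f\rangle+\langle g,g\rangle=1,\quad \langle\mathbf 1,f\rangle+\langle\mathbf 1,g\rangle=0 \] if and only if \[ (\alpha+2m)\langle\mathbf 1,(A-\alpha I)^{-1}\mathbf 1\rangle-m=0. \]
   Context: $\mathrm{ev}(A)$ is the set of eigenvalues of $A$; $J_k$ the $k\times k$ all-ones matrix; $\mathbf 1$ the all-ones vector of the appropriate size; $I$ the identity. *)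

theory Defs
  imports "HOL-Analysis.Analysis"
begin

definition simple_graph :: "('n \<Rightarrow> 'n \<Rightarrow> bool) \<Rightarrow> bool" where
  "simple_graph E \<longleftrightarrow> (\<forall>u v. E u v \<longrightarrow> E v u) \<and> (\<forall>v. \<not> E v v)"

definition adjacency_matrix :: "('n \<Rightarrow> 'n \<Rightarrow> bool) \<Rightarrow> real^'n^'n" where
  "adjacency_matrix E = (\<chi> i j. if E i j then 1 else 0)"

definition ev :: "real^'n^'n \<Rightarrow> real set" where
  "ev A = {c. \<exists>v. v \<noteq> 0 \<and> A *v v = c *\<^sub>R v}"

definition Jmat :: "real^'n^'n" where
  "Jmat = (\<chi> i j. 1)"

end

theory Submission
  imports Defs
begin

lemma Jmat_mult: "(Jmat :: real^'a^'a) *v x = (vec 1 \<bullet> x) *\<^sub>R vec 1"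
  by (simp add: vec_eq_iff matrix_vector_mult_def Jmat_def inner_vec_def)

lemma ones_inner: "(vec 1 :: real^'a) \<bullet> vec 1 = real CARD('a)"
  by (simp add: inner_vec_def)

lemma inner_ones_scale: "(vec 1 :: real^'a) \<bullet> (c *\<^sub>R vec 1) = c * real CARD('a)"
  by (simp add: inner_vec_def)

theorem lemma3p4:
  fixes E :: "'n::finite \<Rightarrow> 'n \<Rightarrow> bool" and A :: "real^'n^'n"
    and \<alpha> :: real and m :: nat
  assumes "simple_graph E"
    and "A = adjacency_matrix E"
    and "CARD('m::finite) = m"
    and "m \<ge> 1"
    and "\<alpha> \<notin> ev A" and "\<alpha> \<noteq> 0" and "\<alpha> \<noteq> - real m" and "\<alpha> \<noteq> - 2 * real m"
  shows "(\<exists>(\<mu>::real) (f::real^'m) (g::real^'n).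
            (Jmat + \<alpha> *\<^sub>R mat 1) *v f = (\<mu> / 2) *\<^sub>R vec 1 \<and>
            (A - Jmat - \<alpha> *\<^sub>R mat 1) *v g = - (\<mu> / 2) *\<^sub>R vec 1 \<and>
            f \<bullet> f + g \<bullet> g = 1 \<and>
            vec 1 \<bullet> f + vec 1 \<bullet> g = 0)
     \<longleftrightarrow> (\<alpha> + 2 * real m) * (vec 1 \<bullet> (matrix_inv (A - \<alpha> *\<^sub>R mat 1) *v vec 1)) - real m = 0"
proof -
  define M where "M = A - \<alpha> *\<^sub>R mat 1"
  define B where "B = matrix_inv M"
  define w where "w = B *v (vec 1 :: real^'n)"
  define q where "q = (vec 1 :: real^'n) \<bullet> w"
  have Mv: "M *v v = A *v v - \<alpha> *\<^sub>R v" for v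
    by (simp add: M_def algebra_simps scaleR_matrix_vector_assoc[symmetric])
  have ker: "\<forall>x. M *v x = 0 \<longrightarrow> x = 0"
  proof (intro allI impI, rule ccontr)
    fix x assume "M *v x = 0" "x \<noteq> 0"
    hence "A *v x = \<alpha> *\<^sub>R x" using Mv by simp
    with \<open>x \<noteq> 0\<close> have "\<alpha> \<in> ev A" unfolding ev_def by blast
    with assms(5) show False by simp
  qed
  hence "invertible M" using matrix_left_invertible_ker invertible_left_inverse by blast
  hence inv: "M ** B = mat 1 \<and> B ** M = mat 1"
    unfolding B_def matrix_inv_def invertible_def by (rule someI_ex)
  have MB: "M *v (B *v v) = v" for v
    using inv by (simp add: matrix_vector_mul_assoc)
  have BM: "B *v (M *v v) = v" for v
    using inv by (simp add: matrix_vector_mul_assoc)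
  have Mw: "M *v w = vec 1" using MB w_def by simp
  have cardm: "real CARD('m) = real m" using assms(3) by simp
  have e1: "(Jmat + \<alpha> *\<^sub>R mat 1) *v f = (vec 1 \<bullet> f) *\<^sub>R vec 1 + \<alpha> *\<^sub>R f" for f :: "real^'m"
    by (simp add: algebra_simps Jmat_mult scaleR_matrix_vector_assoc[symmetric])
  have e2: "(A - Jmat - \<alpha> *\<^sub>R mat 1) *v g = M *v g - (vec 1 \<bullet> g) *\<^sub>R vec 1" for g :: "real^'n"
    by (simp add: Mv algebra_simps Jmat_mult scaleR_matrix_vector_assoc[symmetric])
  have am: "\<alpha> + real m \<noteq> 0" using assms(7) by linarith
  show ?thesis
    unfolding M_def[symmetric] B_def[symmetric] w_def[symmetric] q_def[symmetric]
  proof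
    assume "\<exists>\<mu> (f::real^'m) (g::real^'n). (Jmat + \<alpha> *\<^sub>R mat 1) *v f = (\<mu> / 2) *\<^sub>R vec 1 \<and>
            (A - Jmat - \<alpha> *\<^sub>R mat 1) *v g = - (\<mu> / 2) *\<^sub>R vec 1 \<and>
            f \<bullet> f + g \<bullet> g = 1 \<and> vec 1 \<bullet> f + vec 1 \<bullet> g = 0"
    then obtain \<mu> and f :: "real^'m" and g :: "real^'n" where
      h1': "(Jmat + \<alpha> *\<^sub>R mat 1) *v f = (\<mu> / 2) *\<^sub>R vec 1" and
      h2': "(A - Jmat - \<alpha> *\<^sub>R mat 1) *v g = - (\<mu> / 2) *\<^sub>R vec 1" and
      h3: "f \<bullet> f + g \<bullet> g = 1" and h4: "vec 1 \<bullet> f + vec 1 \<bullet> g = 0"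
      by blast
    have h1: "(vec 1 \<bullet> f) *\<^sub>R vec 1 + \<alpha> *\<^sub>R f = (\<mu> / 2) *\<^sub>R vec 1"
      using h1' e1[of f] by simp
    have h2: "M *v g - (vec 1 \<bullet> g) *\<^sub>R vec 1 = - (\<mu> / 2) *\<^sub>R vec 1"
      using h2' e2[of g] by simp
    define s where "s = vec 1 \<bullet> f"
    define t where "t = vec 1 \<bullet> g"
    define c where "c = (\<mu>/2 - s) / \<alpha>"
    have "\<alpha> *\<^sub>R f = (\<mu>/2 - s) *\<^sub>R vec 1" using h1 unfolding s_def
      by (simp add: algebra_simps)
    hence fc: "f = c *\<^sub>R vec 1" unfolding c_def using assms(6)
      by (metis (no_types, lifting) divide_inverse_commute inverse_eq_divide scaleR_scaleR
          scaleR_one right_inverse)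
    have sc: "s = c * m" unfolding s_def fc inner_ones_scale cardm ..
    have ac: "\<alpha> * c = \<mu>/2 - s" unfolding c_def using assms(6) by simp
    have "M *v g = (t - \<mu>/2) *\<^sub>R vec 1" using h2 unfolding t_def
      by (simp add: algebra_simps)
    hence "B *v (M *v g) = (t - \<mu>/2) *\<^sub>R w" by (simp add: w_def matrix_vector_mult_scaleR)
    hence gw: "g = (t - \<mu>/2) *\<^sub>R w" using BM by simp
    have "vec 1 \<bullet> g = vec 1 \<bullet> ((t - \<mu>/2) *\<^sub>R w)" using gw by (rule arg_cong)
    hence "t = vec 1 \<bullet> ((t - \<mu>/2) *\<^sub>R w)" using t_def by simp
    hence tq: "t = (t - \<mu>/2) * q" unfolding q_def by (simp only: inner_scaleR_right)
    have st: "s + t = 0" using h4 s_def t_def by simp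
    show "(\<alpha> + 2 * real m) * q - real m = 0"
    proof (cases "c = 0")
      case True
      hence "f = 0" "s = 0" using fc sc by auto
      hence "\<mu> = 0" "t = 0" using ac st True by auto
      hence "g = 0" using gw by simp
      with \<open>f = 0\<close> h3 show ?thesis by simp
    next
      case False
      have hmu: "\<mu>/2 = c * (\<alpha> + m)" using ac sc by (simp add: algebra_simps)
      have ht: "t = - (c * m)" using st sc by simp
      have "- (c * m) = (- (c * m) - c * (\<alpha> + m)) * q" using tq by (simp only: hmu ht)
      hence "c * (m - (\<alpha> + 2*m) * q) = 0" by (simp add: algebra_simps)
      thus ?thesis using False by simp
    qed
  next
    assume cond: "(\<alpha> + 2 * real m) * q - real m = 0"
    define N where "N = real m + (\<alpha> + 2*m)^2 * (w \<bullet> w)"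
    have Npos: "N > 0" unfolding N_def using assms(4) by (simp add: add_pos_nonneg)
    define c where "c = 1 / sqrt N"
    have c2: "c^2 * N = 1" unfolding c_def using Npos by (simp add: power_divide)
    define f :: "real^'m" where "f = c *\<^sub>R vec 1"
    define g where "g = (- c * (\<alpha> + 2*m)) *\<^sub>R w"
    define \<mu> where "\<mu> = 2 * c * (\<alpha> + m)"
    have sf: "vec 1 \<bullet> f = c * m" unfolding f_def inner_ones_scale cardm ..
    have "vec 1 \<bullet> g = (- c * (\<alpha> + 2*m)) * q" unfolding g_def q_def
      by (simp only: inner_scaleR_right)
    also have "\<dots> = - c * ((\<alpha> + 2*m) * q)" by simp
    also have "\<dots> = - c * m" using cond by simp
    finally have tg: "vec 1 \<bullet> g = - c * m" .
    have Mg: "M *v g = (- c * (\<alpha> + 2*m)) *\<^sub>R vec 1"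
      unfolding g_def by (simp only: matrix_vector_mult_scaleR Mw)
    show "\<exists>\<mu> (f::real^'m) (g::real^'n). (Jmat + \<alpha> *\<^sub>R mat 1) *v f = (\<mu> / 2) *\<^sub>R vec 1 \<and>
            (A - Jmat - \<alpha> *\<^sub>R mat 1) *v g = - (\<mu> / 2) *\<^sub>R vec 1 \<and>
            f \<bullet> f + g \<bullet> g = 1 \<and> vec 1 \<bullet> f + vec 1 \<bullet> g = 0"
    proof (intro exI conjI)
      show "(Jmat + \<alpha> *\<^sub>R mat 1) *v f = (\<mu> / 2) *\<^sub>R vec 1"
        unfolding e1 sf by (simp add: vec_eq_iff f_def \<mu>_def algebra_simps)
      show "(A - Jmat - \<alpha> *\<^sub>R mat 1) *v g = - (\<mu> / 2) *\<^sub>R vec 1"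
        unfolding e2 tg Mg by (simp add: vec_eq_iff \<mu>_def algebra_simps)
      have "f \<bullet> f = c^2 * m" unfolding f_def by (simp add: inner_vec_def cardm power2_eq_square)
      moreover have "g \<bullet> g = c^2 * (\<alpha> + 2*m)^2 * (w \<bullet> w)" unfolding g_def
        by (simp add: power2_eq_square algebra_simps)
      ultimately show "f \<bullet> f + g \<bullet> g = 1" using c2 unfolding N_def by (simp add: algebra_simps)
      show "vec 1 \<bullet> f + vec 1 \<bullet> g = 0" using sf tg by simp
    qed
  qed
qed

end
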